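(* Let $N\ge1$, positive integers $T_k$, positive reals $\beta_k,q_k^t,\eta_k^t,p_k$ ($1\le k\le N$, $1\le t\le T_k$) be given. For each $k$ let $y_k\in\mathcal Y$, $v_k$ a vector in the dual space of the $x$-space, $x_{k-1}\in\mathcal X$, $x_k^0\in\mathcal X$, $z_k^0\in\mathcal Z$, and points $\tilde u_k^t$ ($1\le t\le T_k$) be arbitrary, and define for $t=1,\dots,T_k$ $$z_k^t=\arg\min_{z\in\mathcal Z}h(z)+\langle-\mathcal A\tilde u_k^t,z\rangle+q_k^tU(z_k^{t-1},z),\quad x_k^t=\arg\min_{x\in\mathcal X}\mu\nu(x)+\langle v_k+\mathcal A^\top z_k^t,x\rangle+\eta_k^tV(x_k^{t-1},x)+p_kV(x_{k-1},x),$$ $\hat x_k=\frac1{T_k}\sum_tx_k^t$, $\hat z_k=\frac1{T_k}\sum_tz_k^t$, $\hat w_k=(\hat x_k,y_k,\hat z_k)$. Then for all $w=(x,y,z)\in\mathcal X\times\mathcal Y\times\mathcal Z$, $$\sum_{k=1}^N\beta_kQ(\hat w_k,w)+A+B\le C+D,$$ where $A=\sum_{k=1}^N\beta_k\big[-\langle\hat x_k,y\rangle+\langle x,y_k\rangle+\langle v_k,\hat x_k-x\rangle-\tilde f^*(y_k)+\tilde f^*(y)+\frac{p_k}{T_k}\sum_{t=1}^{T_k}V(x_{k-1},x_k^t)\big]$, $B=\sum_{k=1}^N\frac{\beta_k}{T_k}\sum_{t=1}^{T_k}\big[\langle\mathcal A^\top z_k^t-\mathcal A^\top z,x_k^t-\tilde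 u_k^t\rangle+q_k^tU(z_k^{t-1},z_k^t)+\eta_k^tV(x_k^{t-1},x_k^t)\big]$, $C=\sum_{k=1}^N\frac{\beta_k}{T_k}\sum_{t=1}^{T_k}\big[q_k^tU(z_k^{t-1},z)-q_k^tU(z_k^t,z)\big]$, $D=\sum_{k=1}^N\frac{\beta_k}{T_k}\sum_{t=1}^{T_k}\big[\eta_k^tV(x_k^{t-1},x)-(\mu+\eta_k^t+p_k)V(x_k^t,x)+p_kV(x_{k-1},x)\big]$.
   Context: Setting. $\mathcal X$ closed convex subset of a finite-dimensional space with norm $\|\cdot\|$ (dual $\|\cdot\|_*$); $\mathcal Z$ closed convex subset of a finite-dimensional space with norm $|\cdot|$; $\mathcal A$ linear operator; $h:\mathcal Z\to\mathbb R$ convex; $\mu\ge0$; $\nu:\mathcal X\to\mathbb R$ $1$-strongly convex w.r.t. $\|\cdot\|$; $\tilde f$ convex differentiable with $\tilde L$-Lipschitz gradient, $\tilde f^*$ its convex conjugate, $\mathcal Y=\mathrm{dom}\,\tilde f^*$. $\zeta:\mathcal Z\to\mathbb R$ $1$-strongly convex w.r.t. $|\cdot|$. $U(\hat z,z)=\zeta(z)-\zeta(\hat z)-\langle\zeta'(\hat z),z-\hat z\rangle$ and $V(\hat x,x)=\nu(x)-\nu(\hat x)-\langle\nu'(\hat x),x-\hat x\rangle$ (subgradients $\zeta',\nu'$). Gap function: $Q((\bar x,\bar y,\bar z),(x,y,z))=[\mu\nu(\bar x)+\langle\bar x,y+\mathcal A^\top z\rangle-\tilde f^*(y)-h(z)]-[\mu\nu(x)+\langle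 x,\bar y+\mathcal A^\top\bar z\rangle-\tilde f^*(\bar y)-h(\bar z)]$. *)

theory Defs
  imports "HOL-Analysis.Analysis"
begin

text \<open>A (not necessarily Euclidean) norm on a real vector space.\<close>
definition is_norm :: "('a::real_vector \<Rightarrow> real) \<Rightarrow> bool" where
  "is_norm n \<longleftrightarrow> (\<forall>x. 0 \<le> n x) \<and> (\<forall>x. n x = 0 \<longleftrightarrow> x = 0)
     \<and> (\<forall>a x. n (a *\<^sub>R x) = \<bar>a\<bar> * n x) \<and> (\<forall>x y. n (x + y) \<le> n x + n y)"

text \<open>Dual norm, the dual space being identified with the space itself via the inner product.\<close>
definition dual_norm :: "('a::real_inner \<Rightarrow> real) \<Rightarrow> 'a \<Rightarrow> real" where
  "dual_norm n g = Sup {g \<bullet> x | x. n x \<le> 1}"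

definition strongly_convex_on :: "('a::real_vector \<Rightarrow> real) \<Rightarrow> 'a set \<Rightarrow> ('a \<Rightarrow> real) \<Rightarrow> bool" where
  "strongly_convex_on n S f \<longleftrightarrow>
     (\<forall>a\<in>S. \<forall>b\<in>S. \<forall>l\<in>{0..1}.
        f (l *\<^sub>R a + (1 - l) *\<^sub>R b) \<le> l * f a + (1 - l) * f b - l * (1 - l) / 2 * (n (a - b))\<^sup>2)"

definition bregman :: "('a::real_inner \<Rightarrow> real) \<Rightarrow> ('a \<Rightarrow> 'a) \<Rightarrow> 'a \<Rightarrow> 'a \<Rightarrow> real" where
  "bregman phi phi' a b = phi b - phi a - phi' a \<bullet> (b - a)"

text \<open>Convex conjugate (real-valued on its effective domain) and its domain.\<close>
definition conj_dom :: "('a::real_inner \<Rightarrow> real) \<Rightarrow> 'a set" where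
  "conj_dom f = {y. bdd_above (range (\<lambda>x. x \<bullet> y - f x))}"

definition conj :: "('a::real_inner \<Rightarrow> real) \<Rightarrow> 'a \<Rightarrow> real" where
  "conj f y = (SUP x. x \<bullet> y - f x)"

text \<open>Gap function Q((xb,yb,zb),(x,y,z)); fs plays the role of the conjugate.\<close>
definition Qgap :: "real \<Rightarrow> ('x::euclidean_space \<Rightarrow> real) \<Rightarrow> ('x \<Rightarrow> 'z::euclidean_space)
    \<Rightarrow> ('x \<Rightarrow> real) \<Rightarrow> ('z \<Rightarrow> real) \<Rightarrow> 'x \<times> 'x \<times> 'z \<Rightarrow> 'x \<times> 'x \<times> 'z \<Rightarrow> real" where
  "Qgap mu nu Aop fs h = (\<lambda>(xb, yb, zb) (x, y, z).
     (mu * nu xb + xb \<bullet> (y + adjoint Aop z) - fs y - h z)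
     - (mu * nu x + x \<bullet> (yb + adjoint Aop zb) - fs yb - h zb))"

end

theory Submission
  imports Defs
begin

lemma three_point:
  fixes S :: "'a::euclidean_space set" and phi :: "'a \<Rightarrow> real"
  assumes S: "convex S" and g: "convex_on S g" and c: "c \<ge> 0" and m: "m \<in> S" and w: "w \<in> S"
    and der: "(phi has_derivative (\<lambda>d. phi' m \<bullet> d)) (at m within S)"
    and opt: "\<forall>w\<in>S. F m \<le> F w"
    and Fe: "\<forall>w\<in>S. F w = g w + c * phi w + L \<bullet> w + K"
  shows "F m + c * bregman phi phi' m w \<le> F w"
proof -
  define d where "d = w - m"
  define f where "f = (\<lambda>s::real. phi (m + s *\<^sub>R d))"
  define Ks where "Ks = g w - g m + L \<bullet> d"
  have img: "(\<lambda>s::real. m + s *\<^sub>R d) ` {0..1} \<subseteq> S"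
  proof
    fix a assume "a \<in> (\<lambda>s::real. m + s *\<^sub>R d) ` {0..1}"
    then obtain s where s: "s \<in> {0..1}" "a = m + s *\<^sub>R d" by auto
    have "a = (1 - s) *\<^sub>R m + s *\<^sub>R w" using s by (simp add: d_def algebra_simps)
    then show "a \<in> S" using s S m w by (auto intro: convexD)
  qed
  have d1: "((\<lambda>s::real. m + s *\<^sub>R d) has_derivative (\<lambda>s. s *\<^sub>R d)) (at 0 within {0..1})"
    by (auto intro!: derivative_eq_intros)
  have der2: "(phi has_derivative (\<lambda>d. phi' m \<bullet> d)) (at ((\<lambda>s::real. m + s *\<^sub>R d) 0) within ((\<lambda>s::real. m + s *\<^sub>R d) ` {0..1}))"
    using has_derivative_subset[OF der img] by simp
  have "(f has_derivative (\<lambda>s. phi' m \<bullet> (s *\<^sub>R d))) (at 0 within {0..1})"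
    unfolding f_def using has_derivative_in_compose[OF d1 der2] by simp
  then have "(f has_field_derivative (phi' m \<bullet> d)) (at 0 within {0..1})"
    unfolding has_field_derivative_def
  proof -
    assume a: "(f has_derivative (\<lambda>s. phi' m \<bullet> (s *\<^sub>R d))) (at 0 within {0..1})"
    have "(\<lambda>s. phi' m \<bullet> (s *\<^sub>R d)) = (*) (phi' m \<bullet> d)" by (auto simp: fun_eq_iff)
    then show "(f has_derivative (*) (phi' m \<bullet> d)) (at 0 within {0..1})" using a by simp
  qed
  then have lim: "((\<lambda>s. (f s - f 0) / (s - 0)) \<longlongrightarrow> phi' m \<bullet> d) (at_right 0)"
    unfolding has_field_derivative_iff using at_within_Icc_at_right[of "0::real" 1] by simp
  have lim2: "((\<lambda>s. c * ((f s - f 0) / (s - 0)) + Ks) \<longlongrightarrow> c * (phi' m \<bullet> d) + Ks) (at_right 0)"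
    by (intro tendsto_intros lim)
  have ev: "\<forall>\<^sub>F s in at_right 0. 0 \<le> c * ((f s - f 0) / (s - 0)) + Ks"
  proof -
    have "\<forall>\<^sub>F s in at_right (0::real). s \<in> {0<..<1}"
      by (simp add: eventually_at_right_field) (auto intro: exI[of _ 1])
    then show ?thesis
    proof (rule eventually_mono)
      fix s :: real assume s: "s \<in> {0<..<1}"
      define zs where "zs = m + s *\<^sub>R d"
      have zs1: "zs = (1 - s) *\<^sub>R m + s *\<^sub>R w" by (simp add: zs_def d_def algebra_simps)
      have zsS: "zs \<in> S" using img s unfolding zs_def by (auto simp: image_subset_iff)
      have gz: "g zs \<le> (1 - s) * g m + s * g w"
        using g m w s unfolding zs1 convex_on_def by auto
      have "F m \<le> F zs" using opt zsS by auto
      also have "F zs = g zs + c * f s + L \<bullet> zs + K" using Fe zsS by (simp add: f_def zs_def)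
      finally have "g m + c * f 0 + L \<bullet> m + K \<le> g zs + c * f s + L \<bullet> zs + K"
        using Fe m by (simp add: f_def)
      then have "0 \<le> s * (g w - g m) + c * (f s - f 0) + s * (L \<bullet> d)"
        using gz by (simp add: zs_def inner_add_right algebra_simps)
      then have "0 \<le> (s * Ks + c * (f s - f 0)) / s" using s by (simp add: Ks_def algebra_simps)
      also have "\<dots> = c * ((f s - f 0) / (s - 0)) + Ks" using s by (simp add: field_simps)
      finally show "0 \<le> c * ((f s - f 0) / (s - 0)) + Ks" .
    qed
  qed
  have key: "0 \<le> c * (phi' m \<bullet> d) + Ks"
    by (rule tendsto_lowerbound[OF lim2 ev]) simp
  show ?thesis using key Fe m w
    by (simp add: bregman_def Ks_def d_def inner_diff_right algebra_simps)
qed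


lemma perk:
  fixes Aop :: "'x::euclidean_space \<Rightarrow> 'z::euclidean_space" and At :: "'z \<Rightarrow> 'x"
    and xs u :: "nat \<Rightarrow> 'x" and zs :: "nat \<Rightarrow> 'z" and U :: "'z \<Rightarrow> 'z \<Rightarrow> real" and V :: "'x \<Rightarrow> 'x \<Rightarrow> real"
  assumes T: "T \<ge> 1" and beta: "beta \<ge> 0" and mu: "mu \<ge> 0"
    and adj: "\<And>a b. a \<bullet> At b = Aop a \<bullet> b"
    and Jh: "h zh \<le> (\<Sum>t=1..T. (1 / real T) * h (zs t))"
    and Jn: "nu xh \<le> (\<Sum>t=1..T. (1 / real T) * nu (xs t))"
    and xh: "xh = (1 / real T) *\<^sub>R (\<Sum>t=1..T. xs t)"
    and zh: "zh = (1 / real T) *\<^sub>R (\<Sum>t=1..T. zs t)"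
    and Zt: "\<And>t. t \<in> {1..T} \<Longrightarrow> h (zs t) + (- Aop (u t)) \<bullet> zs t + q t * U (zs (t - 1)) (zs t) + q t * U (zs t) z
                \<le> h z + (- Aop (u t)) \<bullet> z + q t * U (zs (t - 1)) z"
    and Xt: "\<And>t. t \<in> {1..T} \<Longrightarrow> mu * nu (xs t) + (v + At (zs t)) \<bullet> xs t + eta t * V (xs (t - 1)) (xs t)
                + p * V xp0 (xs t) + (mu + eta t + p) * V (xs t) x
                \<le> mu * nu x + (v + At (zs t)) \<bullet> x + eta t * V (xs (t - 1)) x + p * V xp0 x"
  shows "beta * ((mu * nu xh + xh \<bullet> (y + At z) - fs y - h z) - (mu * nu x + x \<bullet> (ys0 + At zh) - fs ys0 - h zh))
     + beta * (- (xh \<bullet> y) + x \<bullet> ys0 + v \<bullet> (xh - x) - fs ys0 + fs y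
               + p / real T * (\<Sum>t=1..T. V xp0 (xs t)))
     + beta / real T * (\<Sum>t=1..T.
               (At (zs t) - At z) \<bullet> (xs t - u t) + q t * U (zs (t - 1)) (zs t)
               + eta t * V (xs (t - 1)) (xs t))
     \<le> beta / real T * (\<Sum>t=1..T. q t * U (zs (t - 1)) z - q t * U (zs t) z)
     + beta / real T * (\<Sum>t=1..T.
               eta t * V (xs (t - 1)) x - (mu + eta t + p) * V (xs t) x + p * V xp0 x)"
proof -
  define n where "n = real T"
  have n: "n > 0" using T by (simp add: n_def)
  define B where "B = (\<lambda>t. (At (zs t) - At z) \<bullet> (xs t - u t) + q t * U (zs (t - 1)) (zs t)
               + eta t * V (xs (t - 1)) (xs t))"
  define G where "G = (\<lambda>t. mu * nu (xs t) + xs t \<bullet> At z - h z - mu * nu x - x \<bullet> At (zs t) + h (zs t)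
      + v \<bullet> xs t - v \<bullet> x + p * V xp0 (xs t) + B t)"
  define H where "H = (\<lambda>t. (q t * U (zs (t - 1)) z - q t * U (zs t) z) +
               (eta t * V (xs (t - 1)) x - (mu + eta t + p) * V (xs t) x + p * V xp0 x))"
  have GH: "G t \<le> H t" if t: "t \<in> {1..T}" for t
  proof -
    have a1: "Aop (u t) \<bullet> zs t = u t \<bullet> At (zs t)" "Aop (u t) \<bullet> z = u t \<bullet> At z" by (simp_all add: adj)
    show ?thesis using Zt[OF t] Xt[OF t] a1 unfolding G_def H_def B_def
      by (simp add: inner_diff_left inner_diff_right inner_add_left inner_add_right inner_commute)
  qed
  have sGH: "(\<Sum>t=1..T. G t) \<le> (\<Sum>t=1..T. H t)" by (rule sum_mono) (rule GH)
  have cardI: "card {1..T} = T" by simp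
  have sG: "(\<Sum>t=1..T. G t) = mu * (\<Sum>t=1..T. nu (xs t)) + (\<Sum>t=1..T. xs t) \<bullet> At z - n * h z - n * (mu * nu x)
     - (\<Sum>t=1..T. x \<bullet> At (zs t)) + (\<Sum>t=1..T. h (zs t)) + v \<bullet> (\<Sum>t=1..T. xs t) - n * (v \<bullet> x)
     + p * (\<Sum>t=1..T. V xp0 (xs t)) + (\<Sum>t=1..T. B t)"
    unfolding G_def by (simp add: sum.distrib sum_subtractf sum_distrib_left inner_sum_left inner_sum_right n_def)
  have e1: "n * (xh \<bullet> w) = (\<Sum>t=1..T. xs t) \<bullet> w" for w
    using n by (simp add: xh n_def)
  have e1': "n * (v \<bullet> xh) = v \<bullet> (\<Sum>t=1..T. xs t)"
    using n by (simp add: xh n_def)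
  have e2: "n * (x \<bullet> At zh) = (\<Sum>t=1..T. x \<bullet> At (zs t))"
    using n by (simp add: adj zh n_def inner_sum_right)
  have e3: "n * h zh \<le> (\<Sum>t=1..T. h (zs t))"
  proof -
    have "h zh \<le> (\<Sum>t=1..T. h (zs t)) / n" using Jh by (simp add: sum_divide_distrib n_def)
    then show ?thesis using n by (simp add: pos_le_divide_eq mult.commute)
  qed
  have e4: "n * (mu * nu xh) \<le> mu * (\<Sum>t=1..T. nu (xs t))"
  proof -
    have "n * nu xh \<le> (\<Sum>t=1..T. nu (xs t))"
    proof -
      have "nu xh \<le> (\<Sum>t=1..T. nu (xs t)) / n" using Jn by (simp add: sum_divide_distrib n_def)
      then show ?thesis using n by (simp add: pos_le_divide_eq mult.commute)
    qed
    then show ?thesis using mu by (metis mult.left_commute mult_left_mono)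
  qed
  define E where "E = mu * nu xh + xh \<bullet> At z - h z - mu * nu x - x \<bullet> At zh + h zh + v \<bullet> xh - v \<bullet> x"
  have LE: "n * E + p * (\<Sum>t=1..T. V xp0 (xs t)) + (\<Sum>t=1..T. B t) \<le> (\<Sum>t=1..T. G t)"
    unfolding sG E_def using e1[of "At z"] e1' e2 e3 e4 by (simp add: algebra_simps)
  have LHS: "beta * ((mu * nu xh + xh \<bullet> (y + At z) - fs y - h z) - (mu * nu x + x \<bullet> (ys0 + At zh) - fs ys0 - h zh))
     + beta * (- (xh \<bullet> y) + x \<bullet> ys0 + v \<bullet> (xh - x) - fs ys0 + fs y
               + p / real T * (\<Sum>t=1..T. V xp0 (xs t)))
     + beta / real T * (\<Sum>t=1..T. B t) = beta / n * (n * E + p * (\<Sum>t=1..T. V xp0 (xs t)) + (\<Sum>t=1..T. B t))"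
    using n unfolding E_def n_def[symmetric]
    by (simp add: field_simps inner_add_right inner_diff_right inner_commute)
  have RHS: "beta / real T * (\<Sum>t=1..T. q t * U (zs (t - 1)) z - q t * U (zs t) z)
     + beta / real T * (\<Sum>t=1..T.
               eta t * V (xs (t - 1)) x - (mu + eta t + p) * V (xs t) x + p * V xp0 x)
     = beta / n * (\<Sum>t=1..T. H t)"
    unfolding H_def n_def by (simp add: sum.distrib distrib_left)
  have "beta / n * (n * E + p * (\<Sum>t=1..T. V xp0 (xs t)) + (\<Sum>t=1..T. B t)) \<le> beta / n * (\<Sum>t=1..T. H t)"
    using LE sGH beta n by (intro mult_left_mono) auto
  then show ?thesis using LHS RHS unfolding B_def by simp
qed


theorem proposition5p1:
  fixes X :: "'x::euclidean_space set" and Z :: "'z::euclidean_space set"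
    and nx :: "'x \<Rightarrow> real" and nz :: "'z \<Rightarrow> real"
    and Aop :: "'x \<Rightarrow> 'z" and h :: "'z \<Rightarrow> real" and mu :: real
    and nu :: "'x \<Rightarrow> real" and nu' :: "'x \<Rightarrow> 'x"
    and zeta :: "'z \<Rightarrow> real" and zeta' :: "'z \<Rightarrow> 'z"
    and ft :: "'x \<Rightarrow> real" and gft :: "'x \<Rightarrow> 'x" and Lt :: real
    and N :: nat and T :: "nat \<Rightarrow> nat"
    and beta :: "nat \<Rightarrow> real" and p :: "nat \<Rightarrow> real"
    and q :: "nat \<Rightarrow> nat \<Rightarrow> real" and eta :: "nat \<Rightarrow> nat \<Rightarrow> real"
    and ys :: "nat \<Rightarrow> 'x" and v :: "nat \<Rightarrow> 'x" and xp :: "nat \<Rightarrow> 'x"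
    and xs :: "nat \<Rightarrow> nat \<Rightarrow> 'x" and zs :: "nat \<Rightarrow> nat \<Rightarrow> 'z" and u :: "nat \<Rightarrow> nat \<Rightarrow> 'x"
    and x :: 'x and y :: 'x and z :: 'z
  assumes X: "closed X" "convex X"
    and Z: "closed Z" "convex Z"
    and norms: "is_norm nx" "is_norm nz"
    and A_lin: "linear Aop"
    and h_cvx: "convex_on Z h"
    and mu: "mu \<ge> 0"
    and nu_sc: "strongly_convex_on nx X nu"
    and nu_grad: "\<forall>a\<in>X. (nu has_derivative (\<lambda>d. nu' a \<bullet> d)) (at a within X)"
    and zeta_sc: "strongly_convex_on nz Z zeta"
    and zeta_grad: "\<forall>a\<in>Z. (zeta has_derivative (\<lambda>d. zeta' a \<bullet> d)) (at a within Z)"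
    and ft_cvx: "convex_on UNIV ft"
    and ft_grad: "\<forall>a. (ft has_derivative (\<lambda>d. gft a \<bullet> d)) (at a)"
    and ft_lip: "\<forall>a b. dual_norm nx (gft a - gft b) \<le> Lt * nx (a - b)"
    and N: "N \<ge> 1"
    and pos: "\<forall>k\<in>{1..N}. T k \<ge> 1 \<and> beta k > 0 \<and> p k > 0
                 \<and> (\<forall>t\<in>{1..T k}. q k t > 0 \<and> eta k t > 0)"
    and pts: "\<forall>k\<in>{1..N}. ys k \<in> conj_dom ft \<and> xp (k - 1) \<in> X \<and> xs k 0 \<in> X \<and> zs k 0 \<in> Z"
    and z_argmin: "\<forall>k\<in>{1..N}. \<forall>t\<in>{1..T k}. zs k t \<in> Z \<and>
        (\<forall>z'\<in>Z. h (zs k t) + (- Aop (u k t)) \<bullet> zs k t + q k t * bregman zeta zeta' (zs k (t - 1)) (zs k t)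
                 \<le> h z' + (- Aop (u k t)) \<bullet> z' + q k t * bregman zeta zeta' (zs k (t - 1)) z')"
    and x_argmin: "\<forall>k\<in>{1..N}. \<forall>t\<in>{1..T k}. xs k t \<in> X \<and>
        (\<forall>x'\<in>X. mu * nu (xs k t) + (v k + adjoint Aop (zs k t)) \<bullet> xs k t
                   + eta k t * bregman nu nu' (xs k (t - 1)) (xs k t) + p k * bregman nu nu' (xp (k - 1)) (xs k t)
                 \<le> mu * nu x' + (v k + adjoint Aop (zs k t)) \<bullet> x'
                   + eta k t * bregman nu nu' (xs k (t - 1)) x' + p k * bregman nu nu' (xp (k - 1)) x')"
    and w: "x \<in> X" "y \<in> conj_dom ft" "z \<in> Z"
  shows
   "let xh = (\<lambda>k. (1 / real (T k)) *\<^sub>R (\<Sum>t=1..T k. xs k t));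
        zh = (\<lambda>k. (1 / real (T k)) *\<^sub>R (\<Sum>t=1..T k. zs k t));
        V = bregman nu nu'; U = bregman zeta zeta'; At = adjoint Aop; fs = conj ft;
        A = (\<Sum>k=1..N. beta k * (- (xh k \<bullet> y) + x \<bullet> ys k + v k \<bullet> (xh k - x) - fs (ys k) + fs y
               + p k / real (T k) * (\<Sum>t=1..T k. V (xp (k - 1)) (xs k t))));
        B = (\<Sum>k=1..N. beta k / real (T k) * (\<Sum>t=1..T k.
               (At (zs k t) - At z) \<bullet> (xs k t - u k t) + q k t * U (zs k (t - 1)) (zs k t)
               + eta k t * V (xs k (t - 1)) (xs k t)));
        C = (\<Sum>k=1..N. beta k / real (T k) * (\<Sum>t=1..T k.
               q k t * U (zs k (t - 1)) z - q k t * U (zs k t) z));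
        D = (\<Sum>k=1..N. beta k / real (T k) * (\<Sum>t=1..T k.
               eta k t * V (xs k (t - 1)) x - (mu + eta k t + p k) * V (xs k t) x + p k * V (xp (k - 1)) x))
    in (\<Sum>k=1..N. beta k * Qgap mu nu Aop fs h (xh k, ys k, zh k) (x, y, z)) + A + B \<le> C + D"
  proof -
  let ?At = "adjoint Aop"
  define xh where "xh = (\<lambda>k. (1 / real (T k)) *\<^sub>R (\<Sum>t=1..T k. xs k t))"
  define zh where "zh = (\<lambda>k. (1 / real (T k)) *\<^sub>R (\<Sum>t=1..T k. zs k t))"
  have nucvx: "convex_on X nu"
    unfolding convex_on_def
  proof (intro conjI ballI allI impI)
    show "convex X" using X by simp
    fix a b :: 'x and s r :: real assume ab: "a \<in> X" "b \<in> X" and sr: "0 \<le> s" "0 \<le> r" "s + r = 1"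
    then have r: "r = 1 - s" and s1: "s \<in> {0..1}" by auto
    have "nu (s *\<^sub>R a + (1 - s) *\<^sub>R b) \<le> s * nu a + (1 - s) * nu b - s * (1 - s) / 2 * (nx (a - b))\<^sup>2"
      using nu_sc ab s1 unfolding strongly_convex_on_def by blast
    moreover have "0 \<le> s * (1 - s) / 2 * (nx (a - b))\<^sup>2" using s1 by auto
    ultimately show "nu (s *\<^sub>R a + r *\<^sub>R b) \<le> s * nu a + r * nu b" unfolding r by linarith
  qed
  have adj: "\<And>a b. a \<bullet> ?At b = Aop a \<bullet> b" using adjoint_works[OF A_lin] by simp
  have perk_k: "beta k * Qgap mu nu Aop (conj ft) h (xh k, ys k, zh k) (x, y, z)
     + beta k * (- (xh k \<bullet> y) + x \<bullet> ys k + v k \<bullet> (xh k - x) - conj ft (ys k) + conj ft y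
               + p k / real (T k) * (\<Sum>t=1..T k. bregman nu nu' (xp (k - 1)) (xs k t)))
     + beta k / real (T k) * (\<Sum>t=1..T k.
               (?At (zs k t) - ?At z) \<bullet> (xs k t - u k t) + q k t * bregman zeta zeta' (zs k (t - 1)) (zs k t)
               + eta k t * bregman nu nu' (xs k (t - 1)) (xs k t))
     \<le> beta k / real (T k) * (\<Sum>t=1..T k. q k t * bregman zeta zeta' (zs k (t - 1)) z - q k t * bregman zeta zeta' (zs k t) z)
     + beta k / real (T k) * (\<Sum>t=1..T k.
               eta k t * bregman nu nu' (xs k (t - 1)) x - (mu + eta k t + p k) * bregman nu nu' (xs k t) x
               + p k * bregman nu nu' (xp (k - 1)) x)"
    if k: "k \<in> {1..N}" for k
  proof -
    have Tk: "T k \<ge> 1" and bk: "beta k > 0" and pk: "p k > 0"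
      and qe: "\<And>t. t \<in> {1..T k} \<Longrightarrow> q k t > 0 \<and> eta k t > 0" using pos k by auto
    have zsZ: "\<And>t. t \<in> {1..T k} \<Longrightarrow> zs k t \<in> Z" using z_argmin k by auto
    have xsX: "\<And>t. t \<in> {1..T k} \<Longrightarrow> xs k t \<in> X" using x_argmin k by auto
    have sum1: "(\<Sum>t=1..T k. 1 / real (T k)) = 1" using Tk by simp
    have Jh: "h (zh k) \<le> (\<Sum>t=1..T k. (1 / real (T k)) * h (zs k t))"
      unfolding zh_def scaleR_sum_right
      by (rule convex_on_sum[OF _ _ h_cvx sum1]) (use Tk zsZ in auto)
    have Jn: "nu (xh k) \<le> (\<Sum>t=1..T k. (1 / real (T k)) * nu (xs k t))"
      unfolding xh_def scaleR_sum_right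
      by (rule convex_on_sum[OF _ _ nucvx sum1]) (use Tk xsX in auto)
    have Zt: "h (zs k t) + (- Aop (u k t)) \<bullet> zs k t + q k t * bregman zeta zeta' (zs k (t - 1)) (zs k t)
               + q k t * bregman zeta zeta' (zs k t) z
                \<le> h z + (- Aop (u k t)) \<bullet> z + q k t * bregman zeta zeta' (zs k (t - 1)) z"
      if t: "t \<in> {1..T k}" for t
    proof -
      let ?a = "zs k (t - 1)"
      have "(\<lambda>z'. h z' + (- Aop (u k t)) \<bullet> z' + q k t * bregman zeta zeta' ?a z') (zs k t)
            + q k t * bregman zeta zeta' (zs k t) z
            \<le> (\<lambda>z'. h z' + (- Aop (u k t)) \<bullet> z' + q k t * bregman zeta zeta' ?a z') z"
      proof (rule three_point[where S = Z and g = h and L = "- Aop (u k t) - q k t *\<^sub>R zeta' ?a"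
            and K = "- q k t * (zeta ?a - zeta' ?a \<bullet> ?a)"])
        show "convex Z" using Z by simp
        show "convex_on Z h" by (rule h_cvx)
        show "0 \<le> q k t" using qe[OF t] by simp
        show "zs k t \<in> Z" using zsZ[OF t] .
        show "z \<in> Z" using w by simp
        show "(zeta has_derivative (\<bullet>) (zeta' (zs k t))) (at (zs k t) within Z)"
          using zeta_grad zsZ[OF t] by simp
        show "\<forall>w\<in>Z. (\<lambda>z'. h z' + (- Aop (u k t)) \<bullet> z' + q k t * bregman zeta zeta' ?a z') (zs k t)
            \<le> (\<lambda>z'. h z' + (- Aop (u k t)) \<bullet> z' + q k t * bregman zeta zeta' ?a z') w"
          using z_argmin k t by simp
        show "\<forall>w\<in>Z. (\<lambda>z'. h z' + (- Aop (u k t)) \<bullet> z' + q k t * bregman zeta zeta' ?a z') w =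
            h w + q k t * zeta w + (- Aop (u k t) - q k t *\<^sub>R zeta' ?a) \<bullet> w + - q k t * (zeta ?a - zeta' ?a \<bullet> ?a)"
          by (simp add: bregman_def inner_diff_right inner_diff_left algebra_simps)
      qed
      then show ?thesis by simp
    qed
    have Xt: "mu * nu (xs k t) + (v k + ?At (zs k t)) \<bullet> xs k t + eta k t * bregman nu nu' (xs k (t - 1)) (xs k t)
                + p k * bregman nu nu' (xp (k - 1)) (xs k t) + (mu + eta k t + p k) * bregman nu nu' (xs k t) x
                \<le> mu * nu x + (v k + ?At (zs k t)) \<bullet> x + eta k t * bregman nu nu' (xs k (t - 1)) x
                + p k * bregman nu nu' (xp (k - 1)) x"
      if t: "t \<in> {1..T k}" for t
    proof -
      let ?a = "xs k (t - 1)" and ?b = "xp (k - 1)"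
      let ?F = "\<lambda>x'. mu * nu x' + (v k + ?At (zs k t)) \<bullet> x' + eta k t * bregman nu nu' ?a x' + p k * bregman nu nu' ?b x'"
      have "?F (xs k t) + (mu + eta k t + p k) * bregman nu nu' (xs k t) x \<le> ?F x"
      proof (rule three_point[where S = X and g = "\<lambda>_. 0" and L = "v k + ?At (zs k t) - eta k t *\<^sub>R nu' ?a - p k *\<^sub>R nu' ?b"
            and K = "- eta k t * (nu ?a - nu' ?a \<bullet> ?a) - p k * (nu ?b - nu' ?b \<bullet> ?b)"])
        show "convex X" using X by simp
        then show "convex_on X (\<lambda>_. 0)" by (simp add: convex_on_const)
        show "0 \<le> mu + eta k t + p k" using qe[OF t] pk mu by simp
        show "xs k t \<in> X" using xsX[OF t] .
        show "x \<in> X" using w by simp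
        show "(nu has_derivative (\<bullet>) (nu' (xs k t))) (at (xs k t) within X)"
          using nu_grad xsX[OF t] by simp
        show "\<forall>w\<in>X. ?F (xs k t) \<le> ?F w"
          using x_argmin k t by simp
        show "\<forall>w\<in>X. ?F w = 0 + (mu + eta k t + p k) * nu w + (v k + ?At (zs k t) - eta k t *\<^sub>R nu' ?a - p k *\<^sub>R nu' ?b) \<bullet> w
             + (- eta k t * (nu ?a - nu' ?a \<bullet> ?a) - p k * (nu ?b - nu' ?b \<bullet> ?b))"
          by (simp add: bregman_def inner_diff_right inner_diff_left algebra_simps)
      qed
      then show ?thesis by simp
    qed
    have "beta k * ((mu * nu (xh k) + xh k \<bullet> (y + ?At z) - conj ft y - h z) - (mu * nu x + x \<bullet> (ys k + ?At (zh k)) - conj ft (ys k) - h (zh k)))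
     + beta k * (- (xh k \<bullet> y) + x \<bullet> ys k + v k \<bullet> (xh k - x) - conj ft (ys k) + conj ft y
               + p k / real (T k) * (\<Sum>t=1..T k. bregman nu nu' (xp (k - 1)) (xs k t)))
     + beta k / real (T k) * (\<Sum>t=1..T k.
               (?At (zs k t) - ?At z) \<bullet> (xs k t - u k t) + q k t * bregman zeta zeta' (zs k (t - 1)) (zs k t)
               + eta k t * bregman nu nu' (xs k (t - 1)) (xs k t))
     \<le> beta k / real (T k) * (\<Sum>t=1..T k. q k t * bregman zeta zeta' (zs k (t - 1)) z - q k t * bregman zeta zeta' (zs k t) z)
     + beta k / real (T k) * (\<Sum>t=1..T k.
               eta k t * bregman nu nu' (xs k (t - 1)) x - (mu + eta k t + p k) * bregman nu nu' (xs k t) x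
               + p k * bregman nu nu' (xp (k - 1)) x)"
      by (rule perk[where Aop = Aop, OF Tk _ mu adj Jh Jn _ _ Zt Xt])
         (use bk in \<open>auto simp: xh_def zh_def\<close>)
    then show ?thesis by (simp add: Qgap_def)
  qed
  show ?thesis
    unfolding Let_def xh_def[symmetric] zh_def[symmetric]
    unfolding sum.distrib[symmetric]
    by (rule sum_mono) (use perk_k in simp)
qed

end
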